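(* Let $U_1,U_2,U_3,U_4$ be subspaces of a vector space $V$. If for each $j\in\{3,4\}$ we have $U_1\cap U_2\subseteq U_j$ and $U_j=U_j\cap U_1+U_j\cap U_2$, then $$U_3\cap U_4=U_3\cap U_4\cap U_1+U_3\cap U_4\cap U_2.$$ *)

theory Defs
  imports Main HOL.Vector_Spaces "HOL-Library.Set_Algebras"
begin

end

theory Submission
  imports Defs
begin

theorem lemma4p2:
  fixes scale :: "'k::field \<Rightarrow> 'v::ab_group_add \<Rightarrow> 'v"
    and U1 U2 U3 U4 :: "'v set"
  assumes "vector_space scale"
    and "module.subspace scale U1" and "module.subspace scale U2"
    and "module.subspace scale U3" and "module.subspace scale U4"
    and "\<forall>j\<in>{U3, U4}. U1 \<inter> U2 \<subseteq> j \<and> j = (j \<inter> U1) + (j \<inter> U2)"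
  shows "U3 \<inter> U4 = (U3 \<inter> U4 \<inter> U1) + (U3 \<inter> U4 \<inter> U2)"
proof -
  interpret module scale using assms(1) by (simp add: vector_space_def module_def)
  have s1: "subspace U1" and s2: "subspace U2" and s3: "subspace U3" and s4: "subspace U4"
    using assms by auto
  have h3: "U1 \<inter> U2 \<subseteq> U3" "U3 = (U3 \<inter> U1) + (U3 \<inter> U2)"
   and h4: "U1 \<inter> U2 \<subseteq> U4" "U4 = (U4 \<inter> U1) + (U4 \<inter> U2)" using assms(6) by auto
  show ?thesis
  proof
    show "U3 \<inter> U4 \<subseteq> (U3 \<inter> U4 \<inter> U1) + (U3 \<inter> U4 \<inter> U2)"
    proof
      fix x assume x: "x \<in> U3 \<inter> U4"
      then have "x \<in> (U3 \<inter> U1) + (U3 \<inter> U2)" using h3 by auto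
      then obtain a3 b3 where a3: "a3 \<in> U3 \<inter> U1" and b3: "b3 \<in> U3 \<inter> U2" and e3: "x = a3 + b3"
        by (auto elim!: set_plus_elim)
      have "x \<in> (U4 \<inter> U1) + (U4 \<inter> U2)" using h4 x by auto
      then obtain a4 b4 where a4: "a4 \<in> U4 \<inter> U1" and b4: "b4 \<in> U4 \<inter> U2" and e4: "x = a4 + b4"
        by (auto elim!: set_plus_elim)
      have d1: "a3 - a4 \<in> U1" using a3 a4 s1 subspace_diff by blast
      have "a3 - a4 = b4 - b3" using e3 e4 by (simp add: algebra_simps)
      moreover have "b4 - b3 \<in> U2" using b3 b4 s2 subspace_diff by blast
      ultimately have d2: "a3 - a4 \<in> U2" by simp
      have "a3 - a4 \<in> U4" using d1 d2 h4 by auto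
      then have "a4 + (a3 - a4) \<in> U4" using a4 s4 subspace_add by blast
      then have a3U4: "a3 \<in> U4" by simp
      have "x - a3 \<in> U4" using x a3U4 s4 subspace_diff by blast
      then have "b3 \<in> U4" using e3 by simp
      then show "x \<in> (U3 \<inter> U4 \<inter> U1) + (U3 \<inter> U4 \<inter> U2)"
        using a3 b3 a3U4 e3 by (auto intro: set_plus_intro)
    qed
  next
    show "(U3 \<inter> U4 \<inter> U1) + (U3 \<inter> U4 \<inter> U2) \<subseteq> U3 \<inter> U4"
      using s3 s4 subspace_add by (auto elim!: set_plus_elim)
  qed
qed

end
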